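(* Let $H$ be a subdirect product of $H_1 \times \cdots \times H_r$ and let $\pi_i\colon H \to H_i$ be the projection onto the $i$th factor. Assume that $N$ is a soluble normal subgroup of $H$ such that $H/N \cong T^\ell$, where $T$ is a nonabelian simple group and $\ell$ is a positive integer. Then there exist nonnegative integers $\ell_1, \dots, \ell_r$ with $\ell_1 + \cdots + \ell_r \geq \ell$ such that $H_i/N\pi_i \cong T^{\ell_i}$ for all $1 \leq i \leq r$.
   Context: $H$ is a subdirect product of $H_1\times\cdots\times H_r$ means $H \leq H_1\times\cdots\times H_r$ and each coordinate projection restricted to $H$ is surjective. $N\pi_i$ denotes the image of $N$ under $\pi_i$. *)

theory Defs
  imports "HOL-Algebra.Algebra"
begin

definition subdirect_product :: "('i \<Rightarrow> 'a) set \<Rightarrow> ('i \<Rightarrow> ('a, 'b) monoid_scheme) \<Rightarrow> 'i set \<Rightarrow> bool" where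
  "subdirect_product H Hs I \<longleftrightarrow>
     subgroup H (product_group I Hs) \<and> (\<forall>i\<in>I. (\<lambda>h. h i) ` H = carrier (Hs i))"

end

theory Submission
  imports Defs
begin


lemma (in simple_group) simple_center:
  assumes nc: "\<not> comm_group G"
    and a: "a \<in> carrier G" "a \<noteq> \<one>"
  shows "\<exists>s\<in>carrier G. a \<otimes> s \<noteq> s \<otimes> a"
proof (rule ccontr)
  assume "\<not> ?thesis"
  hence ac: "\<forall>s\<in>carrier G. a \<otimes> s = s \<otimes> a" by auto
  define Z where "Z = {z \<in> carrier G. \<forall>s\<in>carrier G. z \<otimes> s = s \<otimes> z}"
  have sub: "subgroup Z G"
  proof (rule subgroupI)
    show "Z \<subseteq> carrier G" by (auto simp: Z_def)
    show "Z \<noteq> {}" using a ac by (auto simp: Z_def)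
    fix x assume x: "x \<in> Z"
    show "inv x \<in> Z" unfolding Z_def
    proof (intro CollectI conjI ballI)
      show "inv x \<in> carrier G" using x by (auto simp: Z_def)
      fix s assume s: "s \<in> carrier G"
      have xc: "x \<in> carrier G" and xs: "x \<otimes> s = s \<otimes> x" using x s by (auto simp: Z_def)
      have "inv x \<otimes> s = inv x \<otimes> (s \<otimes> x) \<otimes> inv x" using xc s by (simp add: m_assoc)
      also have "\<dots> = inv x \<otimes> (x \<otimes> s) \<otimes> inv x" using xs by simp
      also have "\<dots> = s \<otimes> inv x" using xc s by (simp flip: m_assoc)
      finally show "inv x \<otimes> s = s \<otimes> inv x" .
    qed
  next
    fix x y assume x: "x \<in> Z" and y: "y \<in> Z"
    show "x \<otimes> y \<in> Z" unfolding Z_def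
    proof (intro CollectI conjI ballI)
      show "x \<otimes> y \<in> carrier G" using x y unfolding Z_def by (intro m_closed) blast+
      fix s assume s: "s \<in> carrier G"
      have xc: "x \<in> carrier G" and xs: "x \<otimes> s = s \<otimes> x" using x s by (auto simp: Z_def)
      have yc: "y \<in> carrier G" and ys: "y \<otimes> s = s \<otimes> y" using y s by (auto simp: Z_def)
      have "x \<otimes> y \<otimes> s = x \<otimes> (s \<otimes> y)" using xc yc s ys by (simp add: m_assoc)
      also have "\<dots> = s \<otimes> x \<otimes> y" using xc yc s xs by (simp flip: m_assoc)
      finally show "x \<otimes> y \<otimes> s = s \<otimes> (x \<otimes> y)" using xc yc s by (simp add: m_assoc)
    qed
  qed
  have "Z \<lhd> G"
    unfolding normal_inv_iff
  proof (intro conjI ballI sub)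
    fix x h assume x: "x \<in> carrier G" and h: "h \<in> Z"
    have hc: "h \<in> carrier G" and hx: "h \<otimes> x = x \<otimes> h" using x h by (auto simp: Z_def)
    have "x \<otimes> h \<otimes> inv x = h \<otimes> x \<otimes> inv x" by (subst hx) (rule refl)
    also have "\<dots> = h" using x hc by (simp add: m_assoc)
    finally show "x \<otimes> h \<otimes> inv x \<in> Z" using h by simp
  qed
  hence "Z = carrier G \<or> Z = {\<one>}" by (rule no_real_normal_subgroup)
  moreover have "a \<in> Z" using a ac by (auto simp: Z_def)
  ultimately have "Z = carrier G" using a by auto
  hence "comm_group G"
  proof (intro group_comm_groupI)
    fix x y assume ZG: "Z = carrier G" and x: "x \<in> carrier G" and y: "y \<in> carrier G"
    from x ZG have "x \<in> Z" by simp
    thus "x \<otimes> y = y \<otimes> x" using y unfolding Z_def by blast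
  qed
  thus False using nc by simp
qed

lemma (in simple_group) simple_not_solvable:
  assumes nc: "\<not> comm_group G"
  shows "\<not> solvable G"
proof
  assume sol: "solvable G"
  have "derived G (carrier G) = carrier G \<or> derived G (carrier G) = {\<one>}"
    by (rule no_real_normal_subgroup[OF derived_self_is_normal])
  moreover
  have "derived G (carrier G) \<noteq> {\<one>}"
  proof
    assume D: "derived G (carrier G) = {\<one>}"
    have "comm_group G"
    proof (intro group_comm_groupI)
      fix x y assume x: "x \<in> carrier G" and y: "y \<in> carrier G"
      have "x \<otimes> y \<otimes> inv x \<otimes> inv y \<in> derived G (carrier G)"
        unfolding derived_def using x y by (intro generate.incl) blast
      hence e: "x \<otimes> y \<otimes> inv x \<otimes> inv y = \<one>" using D by simp
      have "x \<otimes> y = x \<otimes> y \<otimes> inv x \<otimes> inv y \<otimes> y \<otimes> x" using x y by (simp add: m_assoc)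
      also have "\<dots> = y \<otimes> x" using e x y by simp
      finally show "x \<otimes> y = y \<otimes> x" .
    qed
    thus False using nc by simp
  qed
  ultimately have D: "derived G (carrier G) = carrier G" by blast
  have "(derived G ^^ n) (carrier G) = carrier G" for n
    by (induct n) (simp_all add: D)
  moreover obtain n where "(derived G ^^ n) (carrier G) = {\<one>}"
    using sol solvable_iff_trivial_derived_seq by blast
  ultimately show False using simple_not_triv by simp
qed

lemma derived_pow_consistent:
  assumes G: "group G" and H: "subgroup H G" and K: "K \<subseteq> H"
  shows "(derived (G\<lparr>carrier := H\<rparr>) ^^ n) K = (derived G ^^ n) K \<and> (derived G ^^ n) K \<subseteq> H"
proof (induct n)
  case 0 thus ?case using K by simp
next
  case (Suc n)
  interpret group G by (rule G)
  from Suc have e: "(derived (G\<lparr>carrier := H\<rparr>) ^^ n) K = (derived G ^^ n) K"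
    and s: "(derived G ^^ n) K \<subseteq> H" by auto
  show ?case using derived_consistent[OF s H] derived_incl[OF s H] e by simp
qed

lemma factor_hom:
  assumes G: "group G" and P: "group P" and Q: "group Q"
    and phi: "\<phi> \<in> hom G P" and phis: "\<phi> ` carrier G = carrier P"
    and g: "g \<in> hom G Q" and ker: "kernel G P \<phi> \<subseteq> kernel G Q g"
  shows "\<exists>\<sigma>. \<sigma> \<in> hom P Q \<and> (\<forall>x\<in>carrier G. \<sigma> (\<phi> x) = g x)"
proof -
  interpret G: group G by (rule G)
  interpret P: group P by (rule P)
  interpret Q: group Q by (rule Q)
  interpret gp: group_hom G P \<phi> using phi by (simp add: group_hom_def group_hom_axioms_def G P)
  interpret gq: group_hom G Q g using g by (simp add: group_hom_def group_hom_axioms_def G Q)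
  have wd: "g x = g y" if x: "x \<in> carrier G" and y: "y \<in> carrier G" and e: "\<phi> x = \<phi> y" for x y
  proof -
    have "\<phi> (x \<otimes>\<^bsub>G\<^esub> inv\<^bsub>G\<^esub> y) = \<one>\<^bsub>P\<^esub>" using x y e by simp
    hence "x \<otimes>\<^bsub>G\<^esub> inv\<^bsub>G\<^esub> y \<in> kernel G P \<phi>" using x y by (simp add: kernel_def)
    hence "x \<otimes>\<^bsub>G\<^esub> inv\<^bsub>G\<^esub> y \<in> kernel G Q g" using ker by blast
    hence "g (x \<otimes>\<^bsub>G\<^esub> inv\<^bsub>G\<^esub> y) = \<one>\<^bsub>Q\<^esub>" by (simp add: kernel_def)
    hence "g x \<otimes>\<^bsub>Q\<^esub> inv\<^bsub>Q\<^esub> g y = \<one>\<^bsub>Q\<^esub>" using x y by simp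
    hence "inv\<^bsub>Q\<^esub> (inv\<^bsub>Q\<^esub> g y) = g x"
      using x y by (intro Q.inv_equality) simp_all
    thus ?thesis using y by simp
  qed
  define \<sigma> where "\<sigma> = (\<lambda>y. g (inv_into (carrier G) \<phi> y))"
  have sp: "\<sigma> (\<phi> x) = g x" if x: "x \<in> carrier G" for x
  proof -
    have "inv_into (carrier G) \<phi> (\<phi> x) \<in> carrier G" using x by (simp add: inv_into_into)
    moreover have "\<phi> (inv_into (carrier G) \<phi> (\<phi> x)) = \<phi> x" using x by (simp add: f_inv_into_f)
    ultimately show ?thesis unfolding \<sigma>_def using wd x by blast
  qed
  have "\<sigma> \<in> hom P Q"
  proof (rule homI)
    fix y assume "y \<in> carrier P"
    then obtain x where "x \<in> carrier G" "y = \<phi> x" using phis by auto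
    thus "\<sigma> y \<in> carrier Q" using sp by simp
  next
    fix y z assume "y \<in> carrier P" "z \<in> carrier P"
    then obtain x w where "x \<in> carrier G" "y = \<phi> x" "w \<in> carrier G" "z = \<phi> w" using phis by blast
    thus "\<sigma> (y \<otimes>\<^bsub>P\<^esub> z) = \<sigma> y \<otimes>\<^bsub>Q\<^esub> \<sigma> z" using sp by (simp flip: gp.hom_mult)
  qed
  thus ?thesis using sp by blast
qed



lemma (in group) comm_from_commutator:
  assumes a: "a \<in> carrier G" and s: "s \<in> carrier G" and e: "a \<otimes> s \<otimes> inv a \<otimes> inv s = \<one>"
  shows "a \<otimes> s = s \<otimes> a"
proof -
  have "a \<otimes> s = a \<otimes> s \<otimes> inv a \<otimes> inv s \<otimes> s \<otimes> a" using a s by (simp add: m_assoc)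
  also have "\<dots> = s \<otimes> a" using e a s by simp
  finally show ?thesis .
qed

definition ej :: "('t,'d) monoid_scheme \<Rightarrow> 'i set \<Rightarrow> 'i \<Rightarrow> 't \<Rightarrow> 'i \<Rightarrow> 't" where
  "ej T L j t = (\<lambda>k\<in>L. if k = j then t else \<one>\<^bsub>T\<^esub>)"

definition rs :: "('t,'d) monoid_scheme \<Rightarrow> 'i set \<Rightarrow> 'i set \<Rightarrow> ('i \<Rightarrow> 't) \<Rightarrow> 'i \<Rightarrow> 't" where
  "rs T L F x = (\<lambda>k\<in>L. if k \<in> F then x k else \<one>\<^bsub>T\<^esub>)"

lemma ej_carrier:
  assumes "group T" "t \<in> carrier T"
  shows "ej T L j t \<in> carrier (product_group L (\<lambda>_. T))"
  using assms by (auto simp: ej_def group.is_monoid)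

lemma ej_hom:
  assumes T: "group T" and j: "j \<in> L"
  shows "ej T L j \<in> hom T (product_group L (\<lambda>_. T))"
proof (rule homI)
  fix x assume "x \<in> carrier T" thus "ej T L j x \<in> carrier (product_group L (\<lambda>_. T))"
    by (rule ej_carrier[OF T])
next
  fix x y assume "x \<in> carrier T" "y \<in> carrier T"
  thus "ej T L j (x \<otimes>\<^bsub>T\<^esub> y) = ej T L j x \<otimes>\<^bsub>product_group L (\<lambda>_. T)\<^esub> ej T L j y"
    using T by (auto simp: ej_def fun_eq_iff group.is_monoid)
qed

lemma rs_carrier:
  assumes "group T" "x \<in> carrier (product_group L (\<lambda>_. T))"
  shows "rs T L F x \<in> carrier (product_group L (\<lambda>_. T))"
  using assms by (auto simp: rs_def group.is_monoid)

lemma rs_empty: "rs T L {} x = \<one>\<^bsub>product_group L (\<lambda>_. T)\<^esub>"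
  by (simp add: rs_def)

lemma rs_insert:
  assumes T: "group T" and x: "x \<in> carrier (product_group L (\<lambda>_. T))" and a: "a \<in> L" "a \<notin> F"
  shows "rs T L (insert a F) x = rs T L F x \<otimes>\<^bsub>product_group L (\<lambda>_. T)\<^esub> ej T L a (x a)"
  using assms by (auto simp: rs_def ej_def fun_eq_iff group.is_monoid PiE_iff)

lemma rs_split:
  assumes T: "group T" and x: "x \<in> carrier (product_group L (\<lambda>_. T))"
  shows "x = rs T L J x \<otimes>\<^bsub>product_group L (\<lambda>_. T)\<^esub> rs T L (L - J) x"
  using assms by (auto simp: rs_def fun_eq_iff group.is_monoid PiE_iff extensional_def)



lemma struct_quot:
  fixes T :: "('t,'d) monoid_scheme" and Q :: "('q,'e) monoid_scheme" and L :: "'i set"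
  assumes T: "simple_group T" and nc: "\<not> comm_group T" and fin: "finite L" and Q: "group Q"
    and sig: "\<sigma> \<in> hom (product_group L (\<lambda>_. T)) Q"
    and sur: "\<sigma> ` carrier (product_group L (\<lambda>_. T)) = carrier Q"
  shows "\<exists>J\<subseteq>L. Q \<cong> product_group {..<card (L - J)} (\<lambda>_. T) \<and>
            (\<forall>j\<in>J. \<forall>t\<in>carrier T. \<sigma> (ej T L j t) = \<one>\<^bsub>Q\<^esub>)"
proof -
  interpret T: simple_group T by (rule T)
  have gT: "group T" by (rule T.is_group)
  define P where "P = product_group L (\<lambda>_. T)"
  have gP: "group P" unfolding P_def using gT by simp
  interpret P: group P by (rule gP)
  interpret Q: group Q by (rule Q)
  interpret s: group_hom P Q \<sigma> using sig gP Q by (simp add: group_hom_def group_hom_axioms_def P_def)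
  define J where "J = {j\<in>L. \<exists>x\<in>carrier P. \<sigma> x = \<one>\<^bsub>Q\<^esub> \<and> x j \<noteq> \<one>\<^bsub>T\<^esub>}"
  have full: "\<sigma> (ej T L j t) = \<one>\<^bsub>Q\<^esub>" if j: "j \<in> J" and t: "t \<in> carrier T" for j t
  proof -
    obtain x where x: "x \<in> carrier P" "\<sigma> x = \<one>\<^bsub>Q\<^esub>" "x j \<noteq> \<one>\<^bsub>T\<^esub>" and jL: "j \<in> L"
      using j unfolding J_def by blast
    have xj: "x j \<in> carrier T" using x(1) jL by (auto simp: P_def)
    have ejh: "ej T L j \<in> hom T P" unfolding P_def by (rule ej_hom[OF gT jL])
    interpret c: group_hom T Q "\<sigma> \<circ> ej T L j"
      using hom_compose[OF ejh sig[folded P_def]] gT Q by (simp add: group_hom_def group_hom_axioms_def)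
    interpret e: group_hom T P "ej T L j"
      using ejh gT gP by (simp add: group_hom_def group_hom_axioms_def)
    define A where "A = kernel T Q (\<sigma> \<circ> ej T L j)"
    have "A \<lhd> T" unfolding A_def by (rule c.normal_kernel)
    hence A: "A = carrier T \<or> A = {\<one>\<^bsub>T\<^esub>}" by (rule T.no_real_normal_subgroup)
    have "A \<noteq> {\<one>\<^bsub>T\<^esub>}"
    proof
      assume A1: "A = {\<one>\<^bsub>T\<^esub>}"
      have "\<forall>s\<in>carrier T. x j \<otimes>\<^bsub>T\<^esub> s = s \<otimes>\<^bsub>T\<^esub> x j"
      proof
        fix s assume s: "s \<in> carrier T"
        have es: "ej T L j s \<in> carrier P" using ejh s by (auto simp: hom_def)
        define c where "c = x \<otimes>\<^bsub>P\<^esub> ej T L j s \<otimes>\<^bsub>P\<^esub> inv\<^bsub>P\<^esub> x \<otimes>\<^bsub>P\<^esub> inv\<^bsub>P\<^esub> (ej T L j s)"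
        have sc: "\<sigma> c = \<one>\<^bsub>Q\<^esub>" using x es by (simp add: c_def)
        have xP: "x \<in> (\<Pi>\<^sub>E i\<in>L. carrier T)" using x(1) by (simp add: P_def)
        have "c = ej T L j (x j \<otimes>\<^bsub>T\<^esub> s \<otimes>\<^bsub>T\<^esub> inv\<^bsub>T\<^esub> x j \<otimes>\<^bsub>T\<^esub> inv\<^bsub>T\<^esub> s)"
          using xP es s gT unfolding c_def P_def
          by (auto simp: fun_eq_iff ej_def PiE_iff)
        hence "x j \<otimes>\<^bsub>T\<^esub> s \<otimes>\<^bsub>T\<^esub> inv\<^bsub>T\<^esub> x j \<otimes>\<^bsub>T\<^esub> inv\<^bsub>T\<^esub> s \<in> A"
          using sc xj s by (simp add: A_def kernel_def)
        hence "x j \<otimes>\<^bsub>T\<^esub> s \<otimes>\<^bsub>T\<^esub> inv\<^bsub>T\<^esub> x j \<otimes>\<^bsub>T\<^esub> inv\<^bsub>T\<^esub> s = \<one>\<^bsub>T\<^esub>" using A1 by simp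
        thus "x j \<otimes>\<^bsub>T\<^esub> s = s \<otimes>\<^bsub>T\<^esub> x j" by (rule T.comm_from_commutator[OF xj s])
      qed
      thus False using T.simple_center[OF nc xj x(3)] by blast
    qed
    hence "A = carrier T" using A by blast
    hence "t \<in> A" using t by simp
    thus ?thesis by (simp add: A_def kernel_def)
  qed
  have JL: "J \<subseteq> L" by (auto simp: J_def)
  have Jsub: "F \<subseteq> J \<Longrightarrow> \<sigma> (rs T L F x) = \<one>\<^bsub>Q\<^esub>" if x: "x \<in> carrier P" and F: "finite F" for F x
    using F
  proof (induct F rule: finite_induct)
    case empty thus ?case by (simp add: rs_empty P_def[symmetric])
  next
    case (insert a F)
    have aL: "a \<in> L" using insert JL by blast
    have "rs T L (insert a F) x = rs T L F x \<otimes>\<^bsub>P\<^esub> ej T L a (x a)"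
      using rs_insert[OF gT x[unfolded P_def] aL insert(2)] by (simp add: P_def)
    moreover have "rs T L F x \<in> carrier P" using rs_carrier[OF gT x[unfolded P_def]] by (simp add: P_def)
    moreover have xa: "x a \<in> carrier T" using x aL by (auto simp: P_def)
    moreover have "ej T L a (x a) \<in> carrier P" using ej_carrier[OF gT xa] by (simp add: P_def)
    moreover have "\<sigma> (ej T L a (x a)) = \<one>\<^bsub>Q\<^esub>" using full insert xa by blast
    ultimately show ?case using insert by simp
  qed
  define B where "B = L - J"
  define k where "k = card B"
  have finB: "finite B" using fin by (simp add: B_def)
  obtain \<beta> where \<beta>: "bij_betw \<beta> {..<k} B"
    using ex_bij_betw_nat_finite[OF finB] by (auto simp: k_def atLeast0LessThan)
  define \<beta>' where "\<beta>' = inv_into {..<k} \<beta>"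
  have b1: "\<beta>' m \<in> {..<k}" "\<beta> (\<beta>' m) = m" if "m \<in> B" for m
    using that \<beta> unfolding \<beta>'_def
    by (auto intro: inv_into_into bij_betw_inv_into_right simp: bij_betw_def)
  have b2: "\<beta> a \<in> B" "\<beta>' (\<beta> a) = a" if "a \<in> {..<k}" for a
    using that \<beta> unfolding \<beta>'_def by (auto simp: bij_betw_def)
  define R where "R = product_group {..<k} (\<lambda>_. T)"
  have gR: "group R" unfolding R_def using gT by simp
  interpret R: group R by (rule gR)
  define E where "E = (\<lambda>y. (\<lambda>m\<in>L. if m \<in> B then y (\<beta>' m) else \<one>\<^bsub>T\<^esub>))"
  have Ec: "E y \<in> carrier P" if "y \<in> carrier R" for y
    using that b1 gT by (auto simp: E_def P_def R_def PiE_iff group.is_monoid)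
  have Eh: "E \<in> hom R P"
  proof (rule homI)
    fix y assume "y \<in> carrier R" thus "E y \<in> carrier P" by (rule Ec)
  next
    fix y z assume "y \<in> carrier R" "z \<in> carrier R"
    thus "E (y \<otimes>\<^bsub>R\<^esub> z) = E y \<otimes>\<^bsub>P\<^esub> E z"
      using b1 gT by (auto simp: E_def P_def R_def fun_eq_iff group.is_monoid)
  qed
  have Fh: "\<sigma> \<circ> E \<in> hom R Q" using hom_compose[OF Eh sig[folded P_def]] .
  interpret F: group_hom R Q "\<sigma> \<circ> E" using Fh gR Q by (simp add: group_hom_def group_hom_axioms_def)
  have ker: "kernel R Q (\<sigma> \<circ> E) = {\<one>\<^bsub>R\<^esub>}"
  proof
    show "{\<one>\<^bsub>R\<^esub>} \<subseteq> kernel R Q (\<sigma> \<circ> E)" using F.hom_one by (simp add: kernel_def)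
    show "kernel R Q (\<sigma> \<circ> E) \<subseteq> {\<one>\<^bsub>R\<^esub>}"
    proof
      fix y assume "y \<in> kernel R Q (\<sigma> \<circ> E)"
      hence y: "y \<in> carrier R" and sy: "\<sigma> (E y) = \<one>\<^bsub>Q\<^esub>" by (auto simp: kernel_def)
      have "y a = \<one>\<^bsub>R\<^esub> a" for a
      proof (cases "a \<in> {..<k}")
        case True
        have m: "\<beta> a \<in> B" "\<beta>' (\<beta> a) = a" using b2[OF True] by auto
        hence mL: "\<beta> a \<in> L" and mJ: "\<beta> a \<notin> J" by (auto simp: B_def)
        have "E y (\<beta> a) = y a" using m mL by (simp add: E_def)
        hence "y a = \<one>\<^bsub>T\<^esub>" using mJ mL Ec[OF y] sy unfolding J_def by auto
        thus ?thesis using True by (simp add: R_def)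
      next
        case False
        have yP: "y \<in> (\<Pi>\<^sub>E i\<in>{..<k}. carrier T)" using y unfolding R_def by simp
        have "y a = undefined" by (rule PiE_arb[OF yP False])
        moreover have "\<one>\<^bsub>R\<^esub> a = undefined" using False unfolding R_def by (simp only: one_product_group restrict_apply') simp
        ultimately show ?thesis by simp
      qed
      thus "y \<in> {\<one>\<^bsub>R\<^esub>}" by (simp add: fun_eq_iff)
    qed
  qed
  have img: "(\<sigma> \<circ> E) ` carrier R = carrier Q"
  proof
    show "(\<sigma> \<circ> E) ` carrier R \<subseteq> carrier Q" using F.hom_closed by auto
    show "carrier Q \<subseteq> (\<sigma> \<circ> E) ` carrier R"
    proof
      fix q assume "q \<in> carrier Q"
      then obtain x where x: "x \<in> carrier P" and q: "q = \<sigma> x" using sur by (auto simp: P_def)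
      have xP: "x \<in> (\<Pi>\<^sub>E i\<in>L. carrier T)" using x by (simp add: P_def)
      have spl: "x = rs T L J x \<otimes>\<^bsub>P\<^esub> rs T L B x"
        using rs_split[OF gT x[unfolded P_def]] by (simp add: P_def B_def)
      have c1: "rs T L J x \<in> carrier P" and c2: "rs T L B x \<in> carrier P"
        using rs_carrier[OF gT x[unfolded P_def]] by (simp_all add: P_def)
      have s1: "\<sigma> (rs T L J x) = \<one>\<^bsub>Q\<^esub>"
        using Jsub[OF x] fin JL finite_subset by blast
      have "\<sigma> x = \<sigma> (rs T L B x)"
        using spl c1 c2 s1 by (metis Q.l_one s.hom_closed s.hom_mult)
      define y where "y = (\<lambda>a\<in>{..<k}. x (\<beta> a))"
      have yR: "y \<in> carrier R" using b2 xP by (auto simp: y_def R_def B_def)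
      have "E y = rs T L B x"
        using b1 by (auto simp: E_def y_def rs_def fun_eq_iff)
      hence "q = (\<sigma> \<circ> E) y" using q \<open>\<sigma> x = \<sigma> (rs T L B x)\<close> by simp
      thus "q \<in> (\<sigma> \<circ> E) ` carrier R" using yR by blast
    qed
  qed
  have "\<sigma> \<circ> E \<in> iso R Q" using iso_kernel_image[OF gR Q] Fh ker img by blast
  hence "R \<cong> Q" by (rule is_isoI)
  hence "Q \<cong> R" by (rule R.iso_sym)
  thus ?thesis using JL full unfolding R_def k_def B_def by blast
qed



theorem corollary2p6:
  fixes Hs :: "nat \<Rightarrow> ('a, 'c) monoid_scheme"
    and H N :: "(nat \<Rightarrow> 'a) set"
    and T :: "('t, 'd) monoid_scheme"
    and r l :: nat
  assumes groups: "\<And>i. i \<in> {1..r} \<Longrightarrow> group (Hs i)"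
    and subdirect: "subdirect_product H Hs {1..r}"
    and N_normal: "N \<lhd> (product_group {1..r} Hs)\<lparr>carrier := H\<rparr>"
    and N_soluble: "solvable ((product_group {1..r} Hs)\<lparr>carrier := N\<rparr>)"
    and T_simple: "simple_group T"
    and T_nonabelian: "\<not> comm_group T"
    and l_pos: "l > 0"
    and quot: "((product_group {1..r} Hs)\<lparr>carrier := H\<rparr>) Mod N \<cong> product_group {..<l} (\<lambda>_. T)"
  shows "\<exists>ls :: nat \<Rightarrow> nat. (\<Sum>i\<in>{1..r}. ls i) \<ge> l \<and>
           (\<forall>i\<in>{1..r}. Hs i Mod ((\<lambda>h. h i) ` N) \<cong> product_group {..<ls i} (\<lambda>_. T))"
proof -
  define I where "I = {1..r}"
  define PH where "PH = product_group I Hs"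
  define GH where "GH = PH\<lparr>carrier := H\<rparr>"
  define L where "L = {..<l}"
  define P where "P = product_group L (\<lambda>_. T)"
  interpret T: simple_group T by (rule T_simple)
  have gT: "group T" by (rule T.is_group)
  have gPH: "group PH" unfolding PH_def I_def by (rule product_group) (rule groups)
  interpret PH: group PH by (rule gPH)
  have subH: "subgroup H PH" using subdirect unfolding subdirect_product_def PH_def I_def by blast
  have surjH: "\<And>i. i \<in> I \<Longrightarrow> (\<lambda>h. h i) ` H = carrier (Hs i)"
    using subdirect unfolding subdirect_product_def I_def by blast
  have gGH: "group GH" unfolding GH_def by (rule PH.subgroup_imp_group[OF subH])
  interpret GH: group GH by (rule gGH)
  have Nn: "N \<lhd> GH" using N_normal unfolding GH_def PH_def I_def .
  interpret Nn: normal N GH by (rule Nn)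
  have NsubGH: "subgroup N GH" by (rule Nn.subgroup_axioms)
  have NH: "N \<subseteq> H" using Nn.subset unfolding GH_def by simp
  have subN: "subgroup N PH" using PH.incl_subgroup[OF subH] NsubGH unfolding GH_def by blast
  have gP: "group P" unfolding P_def using gT by simp
  interpret P: group P by (rule gP)
  have carrGH: "carrier GH = H" by (simp add: GH_def)
  have HPH: "H \<subseteq> carrier PH" using subH by (rule subgroup.subset)
  obtain \<psi> where psi: "\<psi> \<in> iso (GH Mod N) P"
    using quot unfolding is_iso_def GH_def PH_def I_def P_def L_def by blast
  have gMod: "group (GH Mod N)" by (rule Nn.factorgroup_is_group)
  define \<phi> where "\<phi> = \<psi> \<circ> (\<lambda>a. N #>\<^bsub>GH\<^esub> a)"
  have phi_hom: "\<phi> \<in> hom GH P"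
    unfolding \<phi>_def using hom_compose[OF Nn.r_coset_hom_Mod] psi by (auto simp: iso_def)
  have psi_bij: "bij_betw \<psi> (carrier (GH Mod N)) (carrier P)" using psi by (auto simp: iso_def)
  have phi_surj: "\<phi> ` H = carrier P"
  proof -
    have "(\<lambda>a. N #>\<^bsub>GH\<^esub> a) ` H = carrier (GH Mod N)" by (simp add: carrier_FactGroup carrGH)
    hence "\<phi> ` H = \<psi> ` carrier (GH Mod N)" unfolding \<phi>_def by (metis image_comp)
    thus ?thesis using psi_bij by (simp add: bij_betw_def)
  qed
  interpret phi: group_hom GH P \<phi> using phi_hom gGH gP by (simp add: group_hom_def group_hom_axioms_def)
  have ker_phi: "kernel GH P \<phi> \<subseteq> N"
  proof
    fix x assume "x \<in> kernel GH P \<phi>"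
    hence x: "x \<in> carrier GH" and px: "\<psi> (N #>\<^bsub>GH\<^esub> x) = \<one>\<^bsub>P\<^esub>" by (auto simp: kernel_def \<phi>_def)
    interpret ps: group_hom "GH Mod N" P \<psi> using psi gMod gP by (simp add: group_hom_def group_hom_axioms_def iso_def)
    have "\<psi> N = \<one>\<^bsub>P\<^esub>" using ps.hom_one by simp
    moreover have "N #>\<^bsub>GH\<^esub> x \<in> carrier (GH Mod N)" using x by (auto simp: carrier_FactGroup)
    moreover have "N \<in> carrier (GH Mod N)" using gMod by (metis group.is_monoid monoid.one_closed one_FactGroup)
    ultimately have "N #>\<^bsub>GH\<^esub> x = N" using px psi_bij by (metis bij_betw_def inj_on_def)
    thus "x \<in> N" using GH.rcos_self[OF x NsubGH] by simp
  qed
  have step2: "\<exists>J\<subseteq>L. Hs i Mod ((\<lambda>h. h i) ` N) \<cong> product_group {..<card (L - J)} (\<lambda>_. T) \<and>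
      (\<forall>j\<in>J. \<forall>t\<in>carrier T. \<forall>h\<in>H. \<phi> h = ej T L j t \<longrightarrow> h i \<in> (\<lambda>h. h i) ` N)"
    if i: "i \<in> I" for i
  proof -
    define K where "K = (\<lambda>h. h i) ` N"
    define Q where "Q = Hs i Mod K"
    have gHi: "group (Hs i)" using groups i unfolding I_def by blast
    interpret Hi: group "Hs i" by (rule gHi)
    have pi_hom: "(\<lambda>h. h i) \<in> hom GH (Hs i)"
      using HPH i by (intro homI) (auto simp: GH_def PH_def PiE_iff subset_iff)
    interpret pi: group_hom GH "Hs i" "\<lambda>h. h i" using pi_hom gGH gHi by (simp add: group_hom_def group_hom_axioms_def)
    have Kn: "K \<lhd> Hs i" unfolding K_def
      using Nn.surj_hom_normal_subgroup[OF pi.group_hom_axioms] surjH[OF i] carrGH by simp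
    interpret Kn: normal K "Hs i" by (rule Kn)
    have gQ: "group Q" unfolding Q_def by (rule Kn.factorgroup_is_group)
    define g where "g = (\<lambda>a. K #>\<^bsub>Hs i\<^esub> a) \<circ> (\<lambda>h. h i)"
    have g_hom: "g \<in> hom GH Q" unfolding g_def Q_def by (rule hom_compose[OF pi_hom Kn.r_coset_hom_Mod])
    have kerg: "kernel GH P \<phi> \<subseteq> kernel GH Q g"
    proof
      fix x assume "x \<in> kernel GH P \<phi>"
      hence xN: "x \<in> N" and xc: "x \<in> carrier GH" using ker_phi by (auto simp: kernel_def)
      have "x i \<in> K" using xN by (simp add: K_def)
      hence "K #>\<^bsub>Hs i\<^esub> x i = K" by (rule Kn.rcos_const[OF gHi])
      thus "x \<in> kernel GH Q g" using xc by (simp add: kernel_def g_def Q_def)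
    qed
    obtain \<sigma> where sig: "\<sigma> \<in> hom P Q" and sp: "\<forall>x\<in>carrier GH. \<sigma> (\<phi> x) = g x"
      using factor_hom[OF gGH gP gQ phi_hom phi_surj[folded carrGH] g_hom kerg] by blast
    have sig_surj: "\<sigma> ` carrier P = carrier Q"
    proof -
      have "\<sigma> ` carrier P = \<sigma> ` \<phi> ` H" using phi_surj by simp
      also have "\<dots> = g ` H" using sp carrGH by (auto simp: image_iff)
      also have "\<dots> = (\<lambda>a. K #>\<^bsub>Hs i\<^esub> a) ` carrier (Hs i)"
        using surjH[OF i] unfolding g_def by (metis image_comp)
      also have "\<dots> = carrier Q" by (simp add: Q_def carrier_FactGroup)
      finally show ?thesis .
    qed
    obtain J where J: "J \<subseteq> L" "Q \<cong> product_group {..<card (L - J)} (\<lambda>_. T)"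
      and Jf: "\<forall>j\<in>J. \<forall>t\<in>carrier T. \<sigma> (ej T L j t) = \<one>\<^bsub>Q\<^esub>"
      using struct_quot[OF T_simple T_nonabelian _ gQ sig[unfolded P_def] sig_surj[unfolded P_def]]
      by (auto simp: L_def)
    have "h i \<in> K" if j: "j \<in> J" and t: "t \<in> carrier T" and h: "h \<in> H" and e: "\<phi> h = ej T L j t" for j t h
    proof -
      have "g h = \<one>\<^bsub>Q\<^esub>" using Jf j t sp h carrGH e by metis
      hence "K #>\<^bsub>Hs i\<^esub> h i = K" by (simp add: g_def Q_def)
      moreover have "h i \<in> carrier (Hs i)" using pi.hom_closed h carrGH by blast
      ultimately show ?thesis using Hi.rcos_self[OF _ Kn.subgroup_axioms] by metis
    qed
    thus ?thesis using J unfolding Q_def K_def by blast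
  qed
  then obtain Jf where Jf: "\<And>i. i \<in> I \<Longrightarrow> Jf i \<subseteq> L"
    "\<And>i. i \<in> I \<Longrightarrow> Hs i Mod ((\<lambda>h. h i) ` N) \<cong> product_group {..<card (L - Jf i)} (\<lambda>_. T)"
    "\<And>i. i \<in> I \<Longrightarrow> \<forall>j\<in>Jf i. \<forall>t\<in>carrier T. \<forall>h\<in>H. \<phi> h = ej T L j t \<longrightarrow> h i \<in> (\<lambda>h. h i) ` N"
    by metis
  \<comment> \<open>Step 3: no coordinate is killed in all factors\<close>
  have cover: "\<exists>i\<in>I. j \<notin> Jf i" if jL: "j \<in> L" for j
  proof (rule ccontr)
    assume "\<not> ?thesis"
    hence allJ: "\<forall>i\<in>I. j \<in> Jf i" by blast
    define K where "K = {h \<in> H. \<phi> h \<in> ej T L j ` carrier T}"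
    have KH: "K \<subseteq> H" by (auto simp: K_def)
    have Kco: "h i \<in> (\<lambda>h. h i) ` N" if "h \<in> K" "i \<in> I" for h i
      using that allJ Jf(3) unfolding K_def by blast
    define GN where "GN = PH\<lparr>carrier := N\<rparr>"
    have gGN: "group GN" unfolding GN_def by (rule PH.subgroup_imp_group[OF subN])
    obtain n where n: "(derived GN ^^ n) (carrier GN) = {\<one>\<^bsub>GN\<^esub>}"
      using group.solvable_iff_trivial_derived_seq[OF gGN] N_soluble unfolding GN_def PH_def I_def by blast
    have dN: "(derived PH ^^ n) N = {\<one>\<^bsub>PH\<^esub>}"
      using n derived_pow_consistent[OF gPH subN subset_refl, of n] by (simp add: GN_def)
    have DK: "(derived PH ^^ n) K \<subseteq> {\<one>\<^bsub>PH\<^esub>}"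
    proof
      fix x assume x: "x \<in> (derived PH ^^ n) K"
      have xc: "x \<in> carrier PH" using PH.exp_of_derived_in_carrier KH HPH x by blast
      have "x i = \<one>\<^bsub>Hs i\<^esub>" if i: "i \<in> I" for i
      proof -
        have gHi: "group (Hs i)" using groups i unfolding I_def by blast
        interpret Hi: group "Hs i" by (rule gHi)
        have pi_hom: "(\<lambda>h. h i) \<in> hom PH (Hs i)"
          using i by (intro homI) (auto simp: PH_def PiE_iff)
        interpret pi: group_hom PH "Hs i" "\<lambda>h. h i" using pi_hom gPH gHi by (simp add: group_hom_def group_hom_axioms_def)
        have "(derived (Hs i) ^^ n) ((\<lambda>h. h i) ` N) = (\<lambda>h. h i) ` (derived PH ^^ n) N"
          by (rule pi.exp_of_derived_img[OF subgroup.subset[OF subN]])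
        also have "\<dots> = {\<one>\<^bsub>Hs i\<^esub>}" using dN by simp
        finally have d1: "(derived (Hs i) ^^ n) ((\<lambda>h. h i) ` N) = {\<one>\<^bsub>Hs i\<^esub>}" .
        have "(\<lambda>h. h i) ` K \<subseteq> (\<lambda>h. h i) ` N" using Kco i by blast
        hence "(derived (Hs i) ^^ n) ((\<lambda>h. h i) ` K) \<subseteq> {\<one>\<^bsub>Hs i\<^esub>}"
          using Hi.mono_exp_of_derived d1 by blast
        moreover have "(derived (Hs i) ^^ n) ((\<lambda>h. h i) ` K) = (\<lambda>h. h i) ` (derived PH ^^ n) K"
          using pi.exp_of_derived_img KH HPH by blast
        ultimately show ?thesis using x by blast
      qed
      hence xe: "\<forall>i\<in>I. x i = \<one>\<^bsub>Hs i\<^esub>" by blast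
      have xP: "x \<in> (\<Pi>\<^sub>E i\<in>I. carrier (Hs i))" using xc by (simp add: PH_def)
      have "x = \<one>\<^bsub>PH\<^esub>"
      proof (rule ext)
        fix i show "x i = \<one>\<^bsub>PH\<^esub> i"
        proof (cases "i \<in> I")
          case True thus ?thesis using xe by (simp add: PH_def)
        next
          case False thus ?thesis using PiE_arb[OF xP False] by (simp add: PH_def)
        qed
      qed
      thus "x \<in> {\<one>\<^bsub>PH\<^esub>}" by simp
    qed
    have dGH: "(derived GH ^^ n) K = (derived PH ^^ n) K"
      using derived_pow_consistent[OF gPH subH KH, of n] by (simp add: GH_def)
    have phiK: "\<phi> ` K = ej T L j ` carrier T"
    proof
      show "\<phi> ` K \<subseteq> ej T L j ` carrier T" by (auto simp: K_def)
      show "ej T L j ` carrier T \<subseteq> \<phi> ` K"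
      proof
        fix y assume "y \<in> ej T L j ` carrier T"
        then obtain t where t: "t \<in> carrier T" and y: "y = ej T L j t" by blast
        have "y \<in> carrier P" using ej_carrier[OF gT t] y by (simp add: P_def)
        then obtain h where h: "h \<in> H" "y = \<phi> h" using phi_surj by (metis imageE)
        hence "h \<in> K" using t y unfolding K_def by blast
        thus "y \<in> \<phi> ` K" using h by blast
      qed
    qed
    have "(derived P ^^ n) (\<phi> ` K) = \<phi> ` (derived GH ^^ n) K"
      using phi.exp_of_derived_img KH carrGH by blast
    also have "\<dots> \<subseteq> {\<one>\<^bsub>P\<^esub>}" using DK dGH phi.hom_one by (auto simp: GH_def)
    finally have dP: "(derived P ^^ n) (ej T L j ` carrier T) \<subseteq> {\<one>\<^bsub>P\<^esub>}" using phiK by simp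
    have ejh: "ej T L j \<in> hom T P" unfolding P_def by (rule ej_hom[OF gT jL])
    interpret e: group_hom T P "ej T L j" using ejh gT gP by (simp add: group_hom_def group_hom_axioms_def)
    have "(derived P ^^ n) (ej T L j ` carrier T) = ej T L j ` (derived T ^^ n) (carrier T)"
      by (rule e.exp_of_derived_img) simp
    hence "ej T L j ` (derived T ^^ n) (carrier T) \<subseteq> {\<one>\<^bsub>P\<^esub>}" using dP by simp
    hence sub1: "(derived T ^^ n) (carrier T) \<subseteq> {\<one>\<^bsub>T\<^esub>}"
    proof (intro subsetI)
      fix y assume a: "ej T L j ` (derived T ^^ n) (carrier T) \<subseteq> {\<one>\<^bsub>P\<^esub>}"
        and y: "y \<in> (derived T ^^ n) (carrier T)"
      have "ej T L j y = \<one>\<^bsub>P\<^esub>" using a y by blast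
      hence "ej T L j y j = \<one>\<^bsub>P\<^esub> j" by simp
      thus "y \<in> {\<one>\<^bsub>T\<^esub>}" using jL by (simp add: ej_def P_def)
    qed
    have "\<one>\<^bsub>T\<^esub> \<in> (derived T ^^ n) (carrier T)"
      using subgroup.one_closed[OF T.exp_of_derived_is_subgroup[OF T.subgroup_self]] by blast
    hence "(derived T ^^ n) (carrier T) = {\<one>\<^bsub>T\<^esub>}" using sub1 by blast
    hence "solvable T" using T.solvable_iff_trivial_derived_seq by blast
    thus False using T.simple_not_solvable[OF T_nonabelian] by blast
  qed
  define ls where "ls = (\<lambda>i. card (L - Jf i))"
  have finI: "finite I" by (simp add: I_def)
  have "L \<subseteq> (\<Union>i\<in>I. L - Jf i)" using cover by blast
  hence "card L \<le> card (\<Union>i\<in>I. L - Jf i)" by (intro card_mono) (auto simp: finI L_def)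
  also have "\<dots> \<le> (\<Sum>i\<in>I. card (L - Jf i))" by (rule card_UN_le[OF finI])
  finally have "l \<le> (\<Sum>i\<in>I. ls i)" by (simp add: L_def ls_def)
  thus ?thesis using Jf(2) unfolding ls_def I_def L_def by blast
qed


end
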